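(* Let $m\le n$, $a>0$, $\lambda>0$, and let $Y\in\mathbb{R}^{m\times n}$ have singular value decomposition $Y = U\,\mathrm{Diag}(\sigma)\,V^T$ with $\sigma=(\sigma_1,\dots,\sigma_m)$, $\sigma_1\ge\dots\ge\sigma_m\ge0$, $U,V$ orthogonal. Then $$X^s = G_{\lambda,a}(Y) := U\,\mathrm{Diag}\big(g_{\lambda,a}(\sigma_1),\dots,g_{\lambda,a}(\sigma_m)\big)\,V^T$$ is a global minimizer of $\min_{X\in\mathbb{R}^{m\times n}} \tfrac12\|X-Y\|_F^2+\lambda T(X)$.
   Context: For $a>0$, $\rho_a(x)=\frac{(a+1)x}{a+x}$ for $x\ge0$. The transformed Schatten-1 penalty of $X\in\mathbb{R}^{m\times n}$ is $T(X)=\sum_{i=1}^{\mathrm{rank}(X)}\rho_a(\sigma_i(X))$, where $\sigma_i(X)$ are the singular values of $X$. For $\lambda>0$ define, with $\mathrm{sgn}(0)=0$, $$h_\lambda(x)=\mathrm{sgn}(x)\left\{\tfrac23(a+|x|)\cos\!\big(\tfrac{\varphi(x)}{3}\big)-\tfrac{2a}{3}+\tfrac{|x|}{3}\right\},\qquad \varphi(x)=\arccos\!\Big(1-\frac{27\lambda a(a+1)}{2(a+|x|)^3}\Big),$$ and the threshold $t=\lambda\frac{a+1}{a}$ if $\lambda\le\frac{a^2}{2(a+1)}$, and $t=\sqrt{2\lambda(a+1)}-\frac a2$ if $\lambda>\frac{a^2}{2(a+1)}$. The scalar thresholding function is $g_{\lambda,a}(w)=0$ if $|w|\le t$ and $g_{\lambda,a}(w)=h_\lambda(w)$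 if $|w|>t$. (It is known that $g_{\lambda,a}(x)$ is a minimizer of $y\mapsto\frac12(y-x)^2+\lambda\rho_a(|y|)$ over $y\in\mathbb{R}$.) $\|\cdot\|_F$ is the Frobenius norm. *)

theory Defs
  imports "Jordan_Normal_Form.Char_Poly"
begin

definition rho :: "real \<Rightarrow> real \<Rightarrow> real" where
  "rho a x = (a + 1) * x / (a + x)"

definition singular_values :: "real mat \<Rightarrow> real multiset" where
  "singular_values X = image_mset sqrt (proots (char_poly (X * transpose_mat X)))"

definition TS1 :: "real \<Rightarrow> real mat \<Rightarrow> real" where
  "TS1 a X = sum_mset (image_mset (rho a) (filter_mset (\<lambda>s. s > 0) (singular_values X)))"

definition frob_norm :: "real mat \<Rightarrow> real" where
  "frob_norm X = sqrt (\<Sum>i<dim_row X. \<Sum>j<dim_col X. (X $$ (i, j))\<^sup>2)"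

definition phi_ang :: "real \<Rightarrow> real \<Rightarrow> real \<Rightarrow> real" where
  "phi_ang lam a x = arccos (1 - 27 * lam * a * (a + 1) / (2 * (a + \<bar>x\<bar>) ^ 3))"

definition h_fun :: "real \<Rightarrow> real \<Rightarrow> real \<Rightarrow> real" where
  "h_fun lam a x = sgn x * (2/3 * (a + \<bar>x\<bar>) * cos (phi_ang lam a x / 3) - 2 * a / 3 + \<bar>x\<bar> / 3)"

definition thr :: "real \<Rightarrow> real \<Rightarrow> real" where
  "thr lam a = (if lam \<le> a\<^sup>2 / (2 * (a + 1)) then lam * (a + 1) / a
                else sqrt (2 * lam * (a + 1)) - a / 2)"

definition g_fun :: "real \<Rightarrow> real \<Rightarrow> real \<Rightarrow> real" where
  "g_fun lam a w = (if \<bar>w\<bar> \<le> thr lam a then 0 else h_fun lam a w)"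

definition diag_rect :: "nat \<Rightarrow> nat \<Rightarrow> (nat \<Rightarrow> real) \<Rightarrow> real mat" where
  "diag_rect m n d = mat m n (\<lambda>(i, j). if i = j then d i else 0)"

end

theory Submission
  imports Defs
begin



lemma thr_le_k:
  fixes a lam y :: real
  assumes a: "a > 0" and l: "lam > 0" and y: "y \<ge> 0"
  shows "thr lam a \<le> y/2 + lam*(a+1)/(a+y)"
proof (cases "lam \<le> a\<^sup>2 / (2 * (a + 1))")
  case True
  hence t: "thr lam a = lam*(a+1)/a" by (simp add: thr_def)
  have c: "2*(lam*(a+1)) \<le> a^2" using True a by (simp add: pos_le_divide_eq algebra_simps)
  have e: "lam*(a+1)/a - lam*(a+1)/(a+y) = lam*(a+1)*y/(a*(a+y))"
    using a y by (simp add: field_simps)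
  have "lam*(a+1)*y*2 \<le> y*(a*(a+y))"
  proof -
    have "lam*(a+1)*y*2 = y * (2*(lam*(a+1)))" by simp
    also have "\<dots> \<le> y * (a^2)" using c y by (rule mult_left_mono)
    also have "\<dots> \<le> y*(a*(a+y))" using y a by (simp add: power2_eq_square mult_left_mono)
    finally show ?thesis .
  qed
  hence "lam*(a+1)*y/(a*(a+y)) \<le> y/2" using a y by (simp add: divide_le_eq)
  thus ?thesis using t e by linarith
next
  case False
  hence t: "thr lam a = sqrt (2*lam*(a+1)) - a/2" by (simp add: thr_def)
  define w where "w = sqrt (2*lam*(a+1))"
  have w2: "w^2 = 2*lam*(a+1)" unfolding w_def using l a by simp
  have "(a+y - w)^2 \<ge> 0" by simp
  hence "2*w*(a+y) \<le> (a+y)^2 + w^2" by (simp add: power2_eq_square algebra_simps)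
  hence "2*w*(a+y) \<le> (a+y)^2 + 2*lam*(a+1)" using w2 by simp
  hence "w \<le> (a+y)/2 + lam*(a+1)/(a+y)" using a y by (simp add: field_simps power2_eq_square)
  moreover have "(a+y)/2 = a/2+y/2" by simp
  ultimately show ?thesis using t w_def by linarith
qed


lemma thr_pos:
  fixes a lam :: real
  assumes a: "a > 0" and l: "lam > 0"
  shows "thr lam a > 0"
proof (cases "lam \<le> a\<^sup>2 / (2 * (a + 1))")
  case True thus ?thesis using a l by (simp add: thr_def)
next
  case False
  hence "a^2/(2*(a+1)) < lam" by simp
  hence "a^2 < lam*(2*(a+1))" using a by (simp add: pos_divide_less_eq)
  hence "a^2 < 2*lam*(a+1)" by (simp add: algebra_simps)
  hence "sqrt (a^2) < sqrt (2*lam*(a+1))" by (simp only: real_sqrt_less_iff)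
  hence "a < sqrt (2*lam*(a+1))" using a by simp
  thus ?thesis using False a by (simp add: thr_def)
qed

lemma small_case:
  fixes a lam x y :: real
  assumes a: "a > 0" and l: "lam > 0" and y: "y \<ge> 0" and x: "x \<le> thr lam a"
  shows "1/2 * x^2 \<le> 1/2*(y-x)^2 + lam * rho a y"
proof -
  have k: "x \<le> y/2 + lam*(a+1)/(a+y)" using thr_le_k[OF a l y] x by simp
  have "1/2*(y-x)^2 + lam * rho a y - 1/2 * x^2 = y * (y/2 + lam*(a+1)/(a+y) - x)"
    unfolding rho_def using a y by (simp add: field_simps power2_eq_square)
  also have "\<dots> \<ge> 0" using k y by simp
  finally show ?thesis by simp
qed


lemma opt_id:
  fixes a lam u y x :: real
  assumes u: "u > 0" and a: "a > 0" and y: "y \<ge> 0" and x: "x = (u-a) + lam*(a+1)*a/u^2"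
  shows "1/2*(y-x)^2 + lam*rho a y - (1/2*((u-a)-x)^2 + lam*rho a (u-a))
     = (y-(u-a))^2*(1/2 - lam*(a+1)*a/(u^2*(a+y)))"
proof -
  define z where "z = a + y"
  have z: "z > 0" using a y z_def by simp
  have yz: "y = z - a" using z_def by simp
  have r1: "rho a (u-a) = (a+1)*(u-a)/u" unfolding rho_def by simp
  have r2: "rho a y = (a+1)*(z-a)/z" unfolding rho_def z_def by simp
  have un: "u \<noteq> 0" "z \<noteq> 0" using u z by auto
  show ?thesis unfolding x r1 r2 unfolding yz z_def[symmetric] using un
    by (simp add: field_simps power2_eq_square)
qed

lemma big_case:
  fixes a lam x :: real
  assumes a: "a > 0" and l: "lam > 0" and xt: "x > thr lam a"
  shows "h_fun lam a x \<ge> 0 \<and> (\<forall>y\<ge>0. 1/2*(h_fun lam a x - x)^2 + lam * rho a (h_fun lam a x)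
            \<le> 1/2*(y-x)^2 + lam * rho a y)"
proof -
  have x0: "x > 0" using thr_pos[OF a l] xt by linarith
  define s where "s = a + x"
  define c where "c = lam*(a+1)"
  define \<beta> where "\<beta> = c*a"
  define q where "q = (\<lambda>u::real. u^3 - s*u^2 + \<beta>)"
  have s0: "s > 0" using a x0 s_def by simp
  have c0: "c > 0" using a l c_def by simp
  have b0: "\<beta> > 0" using a c0 \<beta>_def by simp
  obtain u0 where u0a: "u0 \<ge> a" and u0c: "u0^2 \<ge> 2*c" and qu0: "q u0 < 0"
  proof (cases "lam \<le> a\<^sup>2 / (2 * (a + 1))")
    case True
    hence t: "thr lam a = c/a" by (simp add: thr_def c_def)
    have cc: "2*c \<le> a^2" using True a by (simp add: pos_le_divide_eq algebra_simps c_def)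
    have "q a = a^2 * (c/a - x)" unfolding q_def s_def \<beta>_def using a
      by (simp add: field_simps power2_eq_square power3_eq_cube)
    also have "\<dots> < 0" using t xt a by (simp add: mult_pos_neg)
    finally show ?thesis using that[of a] cc by simp
  next
    case False
    hence t: "thr lam a = sqrt (2*c) - a/2" by (simp add: thr_def c_def algebra_simps)
    define w where "w = sqrt (2*c)"
    have w2: "w^2 = 2*c" unfolding w_def using c0 by simp
    have "a^2/(2*(a+1)) < lam" using False by simp
    hence "a^2 < lam*(2*(a+1))" using a by (simp add: pos_divide_less_eq)
    hence "a^2 < 2*c" by (simp add: algebra_simps c_def)
    hence "sqrt (a^2) < sqrt (2*c)" by (simp only: real_sqrt_less_iff)
    hence wa: "a < w" using a w_def by simp
    have "q w = w^2 * (w - s) + \<beta>" unfolding q_def by (simp add: power2_eq_square power3_eq_cube algebra_simps)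
    also have "\<dots> = 2*c*(w - a/2 - x)" unfolding w2 s_def \<beta>_def by (simp add: algebra_simps)
    also have "\<dots> < 0" using t xt c0 w_def by (simp add: mult_pos_neg)
    finally show ?thesis using that[of w] wa w2 by simp
  qed
  have u00: "u0 > 0" using u0a a by simp
  have qid: "q v - q (2*s/3) = (v - 2*s/3)^2 * (v + s/3)" for v
    unfolding q_def by (simp add: power2_eq_square power3_eq_cube field_simps)
  have "(u0 - 2*s/3)^2 * (u0 + s/3) \<ge> 0" using u00 s0 by (intro mult_nonneg_nonneg) auto
  hence "q (2*s/3) \<le> q u0" using qid[of u0] by linarith
  hence "q (2*s/3) < 0" using qu0 by simp
  hence bs: "27*\<beta> < 4*s^3" unfolding q_def by (simp add: power2_eq_square power3_eq_cube algebra_simps)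
  define A where "A = 1 - 27*\<beta>/(2*s^3)"
  have Am: "-1 \<le> A" unfolding A_def using bs s0 by (simp add: divide_le_eq)
  have Ap: "A \<le> 1" unfolding A_def using b0 s0 by simp
  define \<theta> where "\<theta> = arccos A / 3"
  have cA: "cos (3*\<theta>) = A" unfolding \<theta>_def using cos_arccos[OF Am Ap] by simp
  define C where "C = cos \<theta>"
  have C3: "4*C^3 - 3*C = A" using cA cos_treble_cos[of \<theta>] C_def by simp
  have th: "0 \<le> \<theta>" "\<theta> \<le> pi/3" using arccos_bounded[OF Am Ap] unfolding \<theta>_def by auto
  have Ch: "C \<ge> 1/2" using cos_monotone_0_pi_le[of \<theta> "pi/3"] th cos_60 C_def by simp
  define u where "u = s/3*(1+2*C)"
  have hdef: "h_fun lam a x = u - a"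
  proof -
    have "phi_ang lam a x = arccos A" unfolding phi_ang_def A_def s_def \<beta>_def c_def using x0
      by (simp add: algebra_simps)
    hence "cos (phi_ang lam a x / 3) = C" using C_def \<theta>_def by simp
    thus ?thesis unfolding h_fun_def u_def s_def using x0 by (simp add: algebra_simps)
  qed
  have s3: "s^3 * (4*C^3 - 3*C) = s^3 - 27*\<beta>/2" using C3 s0 unfolding A_def by (simp add: field_simps)
  have qu: "q u = 0"
  proof -
    have "q u = s^3/27*((1+2*C)^3 - 3*(1+2*C)^2) + \<beta>" unfolding q_def u_def
      by (simp add: power2_eq_square power3_eq_cube field_simps)
    also have "(1+2*C)^3 - 3*(1+2*C)^2 = 2*(4*C^3 - 3*C) - 2"
      by (simp add: power2_eq_square power3_eq_cube algebra_simps)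
    also have "s^3/27*(2*(4*C^3 - 3*C) - 2) = (2*(s^3 * (4*C^3 - 3*C)) - 2*s^3)/27" by (simp add: algebra_simps)
    also have "\<dots> = - \<beta>" unfolding s3 by simp
    finally show ?thesis by simp
  qed
  have u23: "u \<ge> 2*s/3" unfolding u_def using Ch s0 by (simp add: algebra_simps)
  have uu0: "u \<ge> u0"
  proof (rule ccontr)
    assume "\<not> u \<ge> u0"
    define d where "d = u0 - u"
    have d0: "d > 0" using \<open>\<not> u \<ge> u0\<close> d_def by simp
    have "q u0 = q u + d*(u*(3*u-2*s) + d*(3*u-s) + d^2)" unfolding q_def d_def
      by (simp add: power2_eq_square power3_eq_cube algebra_simps)
    also have "\<dots> \<ge> 0" using qu d0 u23 s0
      by (intro add_nonneg_nonneg mult_nonneg_nonneg) auto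
    finally show False using qu0 by simp
  qed
  have u0': "u > 0" using uu0 u00 by simp
  have hnn: "u - a \<ge> 0" using uu0 u0a by simp
  have u2c: "u^2 \<ge> 2*c" using uu0 u00 u0c by (smt (verit) power_mono)
  have xh: "x = (u - a) + \<beta>/u^2"
  proof -
    have "u^2 * (u - s) + \<beta> = 0" using qu unfolding q_def by (simp add: power2_eq_square power3_eq_cube algebra_simps)
    hence "u - s + \<beta>/u^2 = 0" using u0' by (simp add: field_simps)
    thus ?thesis unfolding s_def by simp
  qed
  show ?thesis
  proof (intro conjI allI impI)
    show "h_fun lam a x \<ge> 0" using hdef hnn by simp
    fix y :: real assume y: "y \<ge> 0"
    have id: "1/2*(y-x)^2 + lam * rho a y - (1/2*(h_fun lam a x - x)^2 + lam * rho a (h_fun lam a x))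
       = (y - (u-a))^2 * (1/2 - \<beta>/(u^2*(a+y)))"
      unfolding hdef using opt_id[OF u0' a y, of x] xh unfolding \<beta>_def c_def by simp
    have "2*\<beta> \<le> u^2*(a+y)"
    proof -
      have "2*\<beta> = 2*c*a" unfolding \<beta>_def by simp
      also have "\<dots> \<le> u^2 * a" using u2c a by simp
      also have "\<dots> \<le> u^2*(a+y)" using y by (simp add: mult_left_mono)
      finally show ?thesis .
    qed
    hence "\<beta>/(u^2*(a+y)) \<le> 1/2" using u0' a y by (simp add: divide_le_eq)
    hence "(y - (u-a))^2 * (1/2 - \<beta>/(u^2*(a+y))) \<ge> 0" by simp
    thus "1/2*(h_fun lam a x - x)^2 + lam * rho a (h_fun lam a x) \<le> 1/2*(y-x)^2 + lam * rho a y"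
      using id by simp
  qed
qed




lemma mult_entry:
  assumes "A \<in> carrier_mat n k" "B \<in> carrier_mat k m" "i < n" "j < m"
  shows "(A*B)$$(i,j) = (\<Sum>l<k. A$$(i,l)*B$$(l,j))"
  using assms by (simp add: index_mult_mat scalar_prod_def atLeast0LessThan)

lemma mult_vec_entry:
  assumes "A \<in> carrier_mat n k" "v \<in> carrier_vec k" "i < n"
  shows "(A *\<^sub>v v)$i = (\<Sum>l<k. A$$(i,l)*v$l)"
  using assms by (simp add: scalar_prod_def atLeast0LessThan)

lemma sym_real_eigen:
  fixes B :: "real mat"
  assumes B: "B \<in> carrier_mat p p" and p: "p > 0"
    and sym: "\<And>i j. i<p \<Longrightarrow> j<p \<Longrightarrow> B$$(i,j) = B$$(j,i)"
  shows "\<exists>lam v. v \<in> carrier_vec p \<and> v \<noteq> 0\<^sub>v p \<and> B *\<^sub>v v = lam \<cdot>\<^sub>v v"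
proof -
  define Bc where "Bc = map_mat complex_of_real B"
  have Bc: "Bc \<in> carrier_mat p p" using B Bc_def by simp
  have cp: "char_poly Bc = map_poly of_real (char_poly B)"
    unfolding Bc_def by (rule of_real_hom.char_poly_hom[OF B])
  have "degree (char_poly Bc) = p" using degree_monic_char_poly[OF Bc] by simp
  hence "\<not> constant (poly (char_poly Bc))" using p by (simp add: constant_degree)
  then obtain z where z: "poly (char_poly Bc) z = 0" using fundamental_theorem_of_algebra by blast
  hence "eigenvalue Bc z" using eigenvalue_root_char_poly[OF Bc] by simp
  then obtain u where u: "eigenvector Bc u z" unfolding eigenvalue_def by blast
  hence uc: "u \<in> carrier_vec p" and u0: "u \<noteq> 0\<^sub>v p" and eq: "Bc *\<^sub>v u = z \<cdot>\<^sub>v u"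
    unfolding eigenvector_def using Bc by auto
  have ent: "(\<Sum>j<p. complex_of_real (B$$(i,j)) * u$j) = z * u$i" if i: "i<p" for i
  proof -
    have "(Bc *\<^sub>v u)$i = z * u$i" using eq i uc by simp
    moreover have "(Bc *\<^sub>v u)$i = (\<Sum>j<p. Bc$$(i,j) * u$j)" using mult_vec_entry[OF Bc uc i] .
    moreover have "\<And>j. j < p \<Longrightarrow> Bc$$(i,j) = complex_of_real (B$$(i,j))" using i B Bc_def by simp
    ultimately show ?thesis by simp
  qed
  define S where "S = (\<Sum>i<p. cnj (u$i) * (\<Sum>j<p. complex_of_real (B$$(i,j)) * u$j))"
  define N where "N = (\<Sum>i<p. cnj (u$i) * u$i)"
  have SN: "S = z * N" unfolding S_def N_def using ent by (simp add: sum_distrib_left algebra_simps)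
  have "cnj S = (\<Sum>i<p. \<Sum>j<p. u$i * complex_of_real (B$$(i,j)) * cnj (u$j))"
    unfolding S_def by (simp add: sum_distrib_left algebra_simps)
  also have "\<dots> = (\<Sum>j<p. \<Sum>i<p. u$i * complex_of_real (B$$(i,j)) * cnj (u$j))"
    by (rule sum.swap)
  also have "\<dots> = S" unfolding S_def using sym
    by (auto simp: sum_distrib_left algebra_simps intro!: sum.cong)
  finally have cS: "cnj S = S" .
  have Nr: "N = complex_of_real (\<Sum>i<p. (cmod (u$i))^2)"
    unfolding N_def of_real_sum by (rule sum.cong, simp_all add: complex_norm_square[symmetric] mult.commute del: of_real_power)
  obtain i where i: "i < p" "u$i \<noteq> 0" using u0 uc by (metis carrier_vecD eq_vecI index_zero_vec(1,2))
  have "(\<Sum>i<p. (cmod (u$i))^2) > 0"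
  proof -
    have "(\<Sum>i<p. (cmod (u$i))^2) \<ge> (cmod (u$i))^2"
      by (rule member_le_sum) (use i in auto)
    moreover have "(cmod (u$i))^2 > 0" using i by simp
    ultimately show ?thesis by linarith
  qed
  hence N0: "N \<noteq> 0" "cnj N = N" using Nr
    by (metis less_irrefl of_real_eq_0_iff, simp only: Nr complex_cnj_complex_of_real)
  have "cnj z * N = z * N" using cS SN N0 by (metis complex_cnj_mult)
  hence "cnj z = z" using N0 by simp
  hence zr: "z = complex_of_real (Re z)" by (metis Reals_cnj_iff complex_is_Real_iff of_real_Re)
  have "complex_of_real (poly (char_poly B) (Re z)) = poly (char_poly Bc) z"
    unfolding cp by (subst zr, simp add: of_real_hom.poly_map_poly)
  hence "poly (char_poly B) (Re z) = 0" using z by simp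
  hence "eigenvalue B (Re z)" using eigenvalue_root_char_poly[OF B] by simp
  then obtain v where "eigenvector B v (Re z)" unfolding eigenvalue_def by blast
  thus ?thesis unfolding eigenvector_def using B by auto
qed




lemma householder:
  fixes e :: "nat \<Rightarrow> real"
  assumes k: "k < n" and e1: "(\<Sum>i<n. (e i)^2) = 1"
  shows "\<exists>H. H \<in> carrier_mat n n \<and> transpose_mat H = H \<and> H * H = 1\<^sub>m n
     \<and> (\<forall>i<n. H$$(i,k) = e i)
     \<and> (\<forall>i<n. \<forall>j<n. e i = 0 \<and> i \<noteq> k \<longrightarrow> H$$(i,j) = (if i = j then 1 else 0))"
proof -
  define D :: "nat \<Rightarrow> nat \<Rightarrow> real" where "D = (\<lambda>i j. if i = j then 1 else 0)"
  define w where "w = (\<lambda>i. e i - D i k)"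
  define ww where "ww = (\<Sum>l<n. (w l)^2)"
  define c where "c = (if ww = 0 then 0 else 2/ww)"
  define H where "H = mat n n (\<lambda>(i,j). D i j - c * w i * w j)"
  have Hc: "H \<in> carrier_mat n n" unfolding H_def by simp
  have Hij: "H$$(i,j) = D i j - c * w i * w j" if "i<n" "j<n" for i j
    unfolding H_def using that by simp
  have cww: "c^2 * ww = 2*c" unfolding c_def by (simp add: power2_eq_square)
  have sumD1: "(\<Sum>l<n. D i l * f l) = f i" if "i < n" for i f
  proof -
    have "(\<Sum>l<n. D i l * f l) = (\<Sum>l<n. if i = l then f l else 0)"
      by (rule sum.cong) (auto simp: D_def)
    thus ?thesis using that by simp
  qed
  have sumD2: "(\<Sum>l<n. f l * D l j) = f j" if "j < n" for j f
  proof -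
    have "(\<Sum>l<n. f l * D l j) = (\<Sum>l<n. if l = j then f l else 0)"
      by (rule sum.cong) (auto simp: D_def)
    thus ?thesis using that by simp
  qed
  have wwe: "ww = 2 - 2 * e k"
  proof -
    have "ww = (\<Sum>l<n. (e l)^2 - 2 * (e l * D l k) + D l k * D l k)"
      unfolding ww_def w_def by (rule sum.cong) (auto simp: D_def power2_eq_square algebra_simps)
    also have "\<dots> = (\<Sum>l<n. (e l)^2) - 2 * (\<Sum>l<n. e l * D l k) + (\<Sum>l<n. D l k * D l k)"
      by (simp add: sum.distrib sum_subtractf sum_distrib_left)
    also have "\<dots> = 2 - 2 * e k" using sumD2[OF k, of e] sumD2[OF k, of "\<lambda>l. D l k"] e1
      by (simp add: D_def)
    finally show ?thesis .
  qed
  have wk: "w k = e k - 1" unfolding w_def D_def by simp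
  have HH: "H * H = 1\<^sub>m n"
  proof (rule eq_matI)
    fix i j assume i: "i < dim_row (1\<^sub>m n)" and j: "j < dim_col (1\<^sub>m n)"
    hence i: "i < n" and j: "j < n" by auto
    have "(H*H)$$(i,j) = (\<Sum>l<n. (D i l - c * w i * w l) * (D l j - c * w l * w j))"
      using mult_entry[OF Hc Hc i j] Hij i j by simp
    also have "\<dots> = (\<Sum>l<n. D i l * D l j) - c * w i * (\<Sum>l<n. w l * D l j)
         - c * w j * (\<Sum>l<n. D i l * w l) + c^2 * w i * w j * (\<Sum>l<n. (w l)^2)"
      by (simp add: algebra_simps sum.distrib sum_subtractf sum_distrib_left power2_eq_square)
    also have "\<dots> = D i j - 2 * c * w i * w j + c^2 * ww * w i * w j"
      using sumD1[OF i] sumD2[OF j] unfolding ww_def by (simp add: algebra_simps)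
    also have "\<dots> = D i j" unfolding cww by simp
    finally show "(H*H)$$(i,j) = 1\<^sub>m n $$ (i,j)" using i j by (simp add: D_def)
  qed (use Hc in auto)
  have HT: "transpose_mat H = H"
    by (rule eq_matI) (auto simp: Hc H_def D_def)
  have col: "H$$(i,k) = e i" if i: "i < n" for i
  proof (cases "ww = 0")
    case True
    have "w l = 0" if "l < n" for l
    proof -
      have "(w l)^2 \<le> ww" unfolding ww_def by (rule member_le_sum) (use that in auto)
      hence "(w l)^2 = 0" using True by (simp add: antisym)
      thus ?thesis by simp
    qed
    hence "w i = 0" using i by simp
    thus ?thesis using Hij[OF i k] True c_def w_def by simp
  next
    case False
    have "c * w k = -1" unfolding c_def using False wwe wk by (simp add: field_simps)
    hence "c * w i * w k = - w i" by (metis mult.assoc mult.commute mult_minus1_right)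
    hence "H$$(i,k) = D i k + w i" using Hij[OF i k] by simp
    thus ?thesis unfolding w_def by simp
  qed
  have fix0: "H$$(i,j) = (if i = j then 1 else 0)" if "i<n" "j<n" "e i = 0" "i \<noteq> k" for i j
  proof -
    have "w i = 0" unfolding w_def D_def using that by simp
    thus ?thesis using Hij that D_def by simp
  qed
  show ?thesis using Hc HT HH col fix0 by blast
qed




definition diag_upto :: "nat \<Rightarrow> nat \<Rightarrow> real mat \<Rightarrow> bool" where
  "diag_upto n k M = (\<forall>i<n. \<forall>j<n. i \<noteq> j \<and> (i < k \<or> j < k) \<longrightarrow> M$$(i,j) = 0)"

lemma sym_entry:
  assumes "M \<in> carrier_mat n n" "transpose_mat M = M" "i < n" "j < n"
  shows "M$$(i,j) = M$$(j,i)"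
proof -
  have "transpose_mat M $$ (i,j) = M$$(j,i)" using assms(1,3,4) by simp
  thus ?thesis by (simp only: assms(2))
qed

lemma spectral_step:
  fixes M :: "real mat"
  assumes M: "M \<in> carrier_mat n n" and sym: "transpose_mat M = M" and k: "k < n"
    and dk: "diag_upto n k M"
  shows "\<exists>H. H \<in> carrier_mat n n \<and> transpose_mat H = H \<and> H * H = 1\<^sub>m n
           \<and> diag_upto n (Suc k) (H * M * H)"
proof -
  define p where "p = n - k"
  have p0: "p > 0" using k p_def by simp
  have np: "n = p + k" using k p_def by simp
  define B where "B = mat p p (\<lambda>(i,j). M$$(i+k,j+k))"
  have Bc: "B \<in> carrier_mat p p" unfolding B_def by simp
  have Bsym: "B$$(i,j) = B$$(j,i)" if "i<p" "j<p" for i j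
    unfolding B_def using that sym_entry[OF M sym, of "i+k" "j+k"] np by simp
  obtain lam v where vc: "v \<in> carrier_vec p" and v0: "v \<noteq> 0\<^sub>v p" and ev: "B *\<^sub>v v = lam \<cdot>\<^sub>v v"
    using sym_real_eigen[OF Bc p0 Bsym] by blast
  define nv where "nv = (\<Sum>l<p. (v$l)^2)"
  obtain i0 where i0: "i0 < p" "v$i0 \<noteq> 0" using v0 vc by (metis carrier_vecD eq_vecI index_zero_vec(1,2))
  have nv0: "nv > 0"
  proof -
    have "nv \<ge> (v$i0)^2" unfolding nv_def by (rule member_le_sum) (use i0 in auto)
    moreover have "(v$i0)^2 > 0" using i0 by simp
    ultimately show ?thesis by linarith
  qed
  define e where "e = (\<lambda>i. if k \<le> i then v$(i-k) / sqrt nv else 0)"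
  have shift: "(\<Sum>i<n. f i) = (\<Sum>i<k. f i) + (\<Sum>l<p. f (l+k))" for f :: "nat \<Rightarrow> real"
  proof -
    have "(\<Sum>i<n. f i) = (\<Sum>i<k. f i) + (\<Sum>i\<in>{k..<n}. f i)"
      using k by (metis le_less lessThan_atLeast0 sum.atLeastLessThan_concat zero_le)
    also have "(\<Sum>i\<in>{k..<n}. f i) = (\<Sum>l<p. f (l+k))"
      using sum.shift_bounds_nat_ivl[of f 0 k p] np by (simp add: lessThan_atLeast0 add.commute)
    finally show ?thesis .
  qed
  have e1: "(\<Sum>i<n. (e i)^2) = 1"
  proof -
    have "(\<Sum>i<n. (e i)^2) = (\<Sum>l<p. (v$l)^2 / nv)" unfolding shift e_def using nv0
      by (simp add: power_divide)
    also have "\<dots> = 1" unfolding nv_def[symmetric] sum_divide_distrib[symmetric] using nv0 by simp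
    finally show ?thesis .
  qed
  have e0: "e i = 0" if "i < k" for i using that e_def by simp
  have eig: "(\<Sum>j<n. M$$(i,j) * e j) = lam * e i" if i: "i < n" for i
  proof (cases "i < k")
    case True
    have "(\<Sum>j<n. M$$(i,j) * e j) = 0"
    proof (rule sum.neutral, intro ballI)
      fix j assume "j \<in> {..<n}"
      hence j: "j < n" by simp
      show "M$$(i,j) * e j = 0"
      proof (cases "j < k")
        case True thus ?thesis using e0 by simp
      next
        case False
        hence "i \<noteq> j" using \<open>i<k\<close> by simp
        hence "M$$(i,j) = 0" using dk i j True unfolding diag_upto_def by blast
        thus ?thesis by simp
      qed
    qed
    thus ?thesis using e0 True by simp
  next
    case False
    define i' where "i' = i - k"
    have i': "i' < p" "i = i' + k" using False i np i'_def by auto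
    have "(\<Sum>j<n. M$$(i,j) * e j) = (\<Sum>l<p. M$$(i,l+k) * (v$l / sqrt nv))"
      unfolding shift using e0 by (simp add: e_def)
    also have "\<dots> = (\<Sum>l<p. B$$(i',l) * v$l) / sqrt nv"
      unfolding sum_divide_distrib using i' by (intro sum.cong) (auto simp: B_def)
    also have "(\<Sum>l<p. B$$(i',l) * v$l) = (B *\<^sub>v v)$i'" using mult_vec_entry[OF Bc vc i'(1)] by simp
    also have "\<dots> = lam * v$i'" using ev vc i' by simp
    finally show ?thesis using i' False by (simp add: e_def)
  qed
  obtain H where Hc: "H \<in> carrier_mat n n" and HT: "transpose_mat H = H" and HH: "H * H = 1\<^sub>m n"
    and Hk: "\<forall>i<n. H$$(i,k) = e i"
    and Hfix: "\<forall>i<n. \<forall>j<n. e i = 0 \<and> i \<noteq> k \<longrightarrow> H$$(i,j) = (if i = j then 1 else 0)"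
    using householder[OF k e1] by blast
  have Hs: "H$$(i,j) = H$$(j,i)" if "i<n" "j<n" for i j using sym_entry[OF Hc HT that] .
  have Ms: "M$$(i,j) = M$$(j,i)" if "i<n" "j<n" for i j using sym_entry[OF M sym that] .
  define M' where "M' = H * M * H"
  have M'c: "M' \<in> carrier_mat n n" unfolding M'_def using Hc M by simp
  have M'T: "transpose_mat M' = M'"
  proof -
    have HMc: "H * M \<in> carrier_mat n n" using Hc M by simp
    have "transpose_mat (H * M * H) = transpose_mat H * transpose_mat (H * M)"
      using transpose_mult[OF HMc Hc] .
    also have "transpose_mat (H * M) = transpose_mat M * transpose_mat H" using transpose_mult[OF Hc M] .
    finally have "transpose_mat (H * M * H) = H * (M * H)" unfolding HT sym .
    also have "\<dots> = H * M * H" using Hc M by simp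
    finally show ?thesis unfolding M'_def .
  qed
  have M'e: "M'$$(i,j) = (\<Sum>b<n. (\<Sum>a<n. H$$(i,a) * M$$(a,b)) * H$$(b,j))" if "i<n" "j<n" for i j
  proof -
    have HMc: "H * M \<in> carrier_mat n n" using Hc M by simp
    have "M'$$(i,j) = (\<Sum>b<n. (H*M)$$(i,b) * H$$(b,j))" unfolding M'_def using mult_entry[OF HMc Hc that] .
    also have "\<dots> = (\<Sum>b<n. (\<Sum>a<n. H$$(i,a) * M$$(a,b)) * H$$(b,j))"
      using mult_entry[OF Hc M that(1)] by (intro sum.cong) auto
    finally show ?thesis .
  qed
  have row_lt: "M'$$(i,j) = 0" if i: "i < k" and j: "j < n" and ij: "i \<noteq> j" for i j
  proof -
    have in_: "i < n" using i k by simp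
    have "(\<Sum>a<n. H$$(i,a) * M$$(a,b)) = M$$(i,b)" if "b < n" for b
    proof -
      have "(\<Sum>a<n. H$$(i,a) * M$$(a,b)) = (\<Sum>a<n. if i = a then M$$(a,b) else 0)"
        using Hfix e0[OF i] i in_ by (intro sum.cong) auto
      thus ?thesis using in_ by simp
    qed
    hence "M'$$(i,j) = (\<Sum>b<n. M$$(i,b) * H$$(b,j))" using M'e[OF in_ j] by simp
    also have "\<dots> = (\<Sum>b<n. if b = i then M$$(i,i) * H$$(i,j) else 0)"
    proof (intro sum.cong refl)
      fix b assume "b \<in> {..<n}"
      hence b: "b < n" by simp
      show "M$$(i,b) * H$$(b,j) = (if b = i then M$$(i,i) * H$$(i,j) else 0)"
        using dk i in_ b unfolding diag_upto_def by auto
    qed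
    also have "\<dots> = M$$(i,i) * H$$(i,j)" using in_ by simp
    also have "H$$(i,j) = 0" using Hfix e0[OF i] i in_ j ij by auto
    finally show ?thesis by simp
  qed
  have row_k: "M'$$(k,j) = 0" if j: "j < n" and kj: "k \<noteq> j" for j
  proof -
    have "(\<Sum>a<n. H$$(k,a) * M$$(a,b)) = lam * e b" if b: "b < n" for b
    proof -
      have "(\<Sum>a<n. H$$(k,a) * M$$(a,b)) = (\<Sum>a<n. M$$(b,a) * e a)"
        using Hk Hs Ms b k by (intro sum.cong) (auto simp: mult.commute)
      thus ?thesis using eig[OF b] by simp
    qed
    hence "M'$$(k,j) = (\<Sum>b<n. lam * e b * H$$(b,j))" using M'e[OF k j] by simp
    also have "\<dots> = lam * (\<Sum>b<n. H$$(k,b) * H$$(b,j))"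
      unfolding sum_distrib_left using Hk Hs k by (intro sum.cong) (auto simp: mult.assoc)
    also have "(\<Sum>b<n. H$$(k,b) * H$$(b,j)) = (H*H)$$(k,j)" using mult_entry[OF Hc Hc k j] by simp
    also have "\<dots> = 0" using HH k j kj by simp
    finally show ?thesis by simp
  qed
  have "diag_upto n (Suc k) M'"
    unfolding diag_upto_def
  proof (intro allI impI)
    fix i j assume i: "i < n" and j: "j < n" and c: "i \<noteq> j \<and> (i < Suc k \<or> j < Suc k)"
    have gen: "M'$$(x,y) = 0" if "x < Suc k" "y < n" "x \<noteq> y" for x y
    proof (cases "x < k")
      case True thus ?thesis using row_lt that by simp
    next
      case False hence "x = k" using that by simp
      thus ?thesis using row_k that by simp
    qed
    show "M'$$(i,j) = 0"
    proof (cases "i < Suc k")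
      case True thus ?thesis using gen j c by simp
    next
      case False
      hence "j < Suc k" using c by simp
      hence "M'$$(j,i) = 0" using gen i c by simp
      thus ?thesis using sym_entry[OF M'c M'T i j] by simp
    qed
  qed
  thus ?thesis using Hc HT HH M'_def by blast
qed




lemma spectral:
  fixes A :: "real mat"
  assumes A: "A \<in> carrier_mat n n" and sym: "transpose_mat A = A"
  shows "\<exists>W. W \<in> carrier_mat n n \<and> W * transpose_mat W = 1\<^sub>m n \<and> transpose_mat W * W = 1\<^sub>m n
           \<and> diag_upto n n (transpose_mat W * A * W)"
proof -
  have "k \<le> n \<Longrightarrow> \<exists>W. W \<in> carrier_mat n n \<and> W * transpose_mat W = 1\<^sub>m n \<and> transpose_mat W * W = 1\<^sub>m n
           \<and> diag_upto n k (transpose_mat W * A * W)" for k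
  proof (induction k)
    case 0
    show ?case by (rule exI[of _ "1\<^sub>m n"]) (auto simp: diag_upto_def)
  next
    case (Suc k)
    hence k: "k < n" by simp
    obtain W where Wc: "W \<in> carrier_mat n n" and W1: "W * transpose_mat W = 1\<^sub>m n"
      and W2: "transpose_mat W * W = 1\<^sub>m n" and dk: "diag_upto n k (transpose_mat W * A * W)"
      using Suc k by auto
    define M where "M = transpose_mat W * A * W"
    have WTc: "transpose_mat W \<in> carrier_mat n n" using Wc by simp
    have Mc: "M \<in> carrier_mat n n" unfolding M_def using Wc A by simp
    have MT: "transpose_mat M = M"
    proof -
      have c1: "transpose_mat W * A \<in> carrier_mat n n" using Wc A by simp
      have "transpose_mat M = transpose_mat W * transpose_mat (transpose_mat W * A)"
        unfolding M_def using transpose_mult[OF c1 Wc] .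
      also have "transpose_mat (transpose_mat W * A) = transpose_mat A * W"
        using transpose_mult[OF WTc A] by simp
      finally show ?thesis unfolding sym M_def using Wc A WTc by simp
    qed
    obtain H where Hc: "H \<in> carrier_mat n n" and HT: "transpose_mat H = H" and HH: "H * H = 1\<^sub>m n"
      and dk1: "diag_upto n (Suc k) (H * M * H)"
      using spectral_step[OF Mc MT k] dk M_def by blast
    define W' where "W' = W * H"
    have W'c: "W' \<in> carrier_mat n n" unfolding W'_def using Wc Hc by simp
    have W'T: "transpose_mat W' = H * transpose_mat W"
      unfolding W'_def using transpose_mult[OF Wc Hc] HT by simp
    have HWc: "H * transpose_mat W \<in> carrier_mat n n" using Hc WTc by (rule mult_carrier_mat)
    have WAc: "transpose_mat W * A \<in> carrier_mat n n" using WTc A by (rule mult_carrier_mat)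
    have WHc: "W * H \<in> carrier_mat n n" using Wc Hc by (rule mult_carrier_mat)
    have e1: "W' * transpose_mat W' = 1\<^sub>m n"
    proof -
      have "W' * transpose_mat W' = W * H * (H * transpose_mat W)"
        unfolding W'T unfolding W'_def ..
      also have "\<dots> = W * (H * (H * transpose_mat W))" using assoc_mult_mat[OF Wc Hc HWc] .
      also have "H * (H * transpose_mat W) = (H * H) * transpose_mat W" using assoc_mult_mat[OF Hc Hc WTc] by simp
      also have "\<dots> = transpose_mat W" using HH WTc by simp
      finally show ?thesis using W1 by simp
    qed
    have e2: "transpose_mat W' * W' = 1\<^sub>m n"
    proof -
      have "transpose_mat W' * W' = H * transpose_mat W * (W * H)"
        unfolding W'T unfolding W'_def ..
      also have "\<dots> = H * (transpose_mat W * (W * H))" using assoc_mult_mat[OF Hc WTc WHc] .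
      also have "transpose_mat W * (W * H) = (transpose_mat W * W) * H" using assoc_mult_mat[OF WTc Wc Hc] by simp
      also have "\<dots> = H" using W2 Hc by simp
      finally show ?thesis using HH by simp
    qed
    have e3: "transpose_mat W' * A * W' = H * M * H"
    proof -
      have "transpose_mat W' * A * W' = H * transpose_mat W * A * (W * H)"
        unfolding W'T unfolding W'_def ..
      also have "H * transpose_mat W * A = H * (transpose_mat W * A)" using assoc_mult_mat[OF Hc WTc A] .
      also have "H * (transpose_mat W * A) * (W * H) = H * ((transpose_mat W * A) * (W * H))"
        using assoc_mult_mat[OF Hc WAc WHc] .
      also have "(transpose_mat W * A) * (W * H) = (transpose_mat W * A * W) * H"
        using assoc_mult_mat[OF WAc Wc Hc] by simp
      also have "H * (transpose_mat W * A * W * H) = H * (transpose_mat W * A * W) * H"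
        using assoc_mult_mat[OF Hc Mc[unfolded M_def] Hc] by simp
      finally show ?thesis unfolding M_def .
    qed
    have "diag_upto n (Suc k) (transpose_mat W' * A * W')" unfolding e3 by (rule dk1)
    thus ?case using W'c e1 e2 by blast
  qed
  thus ?thesis by simp
qed




lemma assoc':
  fixes A B C :: "real mat"
  assumes "dim_col A = dim_row B" "dim_col B = dim_row C"
  shows "A * B * C = A * (B * C)"
proof -
  have "A \<in> carrier_mat (dim_row A) (dim_col A)" "B \<in> carrier_mat (dim_col A) (dim_col B)"
       "C \<in> carrier_mat (dim_col B) (dim_col C)" using assms by (auto intro: carrier_matI)
  thus ?thesis by (rule assoc_mult_mat)
qed

lemma cancel_l:
  fixes A B X :: "real mat"
  assumes "B * A = 1\<^sub>m k" "dim_col B = dim_row A" "dim_col A = dim_row X" "dim_row X = k"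
  shows "B * (A * X) = X"
proof -
  have "B * (A * X) = (B * A) * X" using assoc'[OF assms(2,3)] by simp
  also have "\<dots> = X" unfolding assms(1) using assms(4) by simp
  finally show ?thesis .
qed

definition tr :: "real mat \<Rightarrow> real" where
  "tr A = (\<Sum>i<dim_row A. A$$(i,i))"

definition fro2 :: "real mat \<Rightarrow> real" where
  "fro2 M = (\<Sum>i<dim_row M. \<Sum>j<dim_col M. (M$$(i,j))^2)"

lemma frob_sq: "(frob_norm M)^2 = fro2 M"
  unfolding frob_norm_def fro2_def by (simp add: sum_nonneg)

lemma tr_comm:
  assumes A: "A \<in> carrier_mat m n" and B: "B \<in> carrier_mat n m"
  shows "tr (A * B) = tr (B * A)"
proof -
  have "tr (A * B) = (\<Sum>i<m. \<Sum>l<n. A$$(i,l) * B$$(l,i))"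
    unfolding tr_def using A B mult_entry[OF A B] by simp
  also have "\<dots> = (\<Sum>l<n. \<Sum>i<m. B$$(l,i) * A$$(i,l))"
    by (subst sum.swap) (simp add: mult.commute)
  also have "\<dots> = tr (B * A)"
    unfolding tr_def using A B mult_entry[OF B A] by simp
  finally show ?thesis .
qed

lemma fro2_tr:
  assumes M: "M \<in> carrier_mat m n"
  shows "fro2 M = tr (M * transpose_mat M)"
proof -
  have MT: "transpose_mat M \<in> carrier_mat n m" using M by simp
  show ?thesis unfolding fro2_def tr_def using M mult_entry[OF M MT]
    by (simp add: power2_eq_square)
qed

lemma fro2_inv:
  fixes U V M :: "real mat"
  assumes U: "U \<in> carrier_mat m m" and V: "V \<in> carrier_mat n n" and M: "M \<in> carrier_mat m n"
    and U1: "transpose_mat U * U = 1\<^sub>m m" and V1: "transpose_mat V * V = 1\<^sub>m n"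
  shows "fro2 (U * M * transpose_mat V) = fro2 M"
proof -
  have UT: "transpose_mat U \<in> carrier_mat m m" and VT: "transpose_mat V \<in> carrier_mat n n"
    and MT: "transpose_mat M \<in> carrier_mat n m" using U V M by auto
  have UM: "U * M \<in> carrier_mat m n" using U M by (rule mult_carrier_mat)
  have UMV: "U * M * transpose_mat V \<in> carrier_mat m n" using UM VT by (rule mult_carrier_mat)
  have MMT: "M * transpose_mat M \<in> carrier_mat m m" using M MT by (rule mult_carrier_mat)
  have t1: "transpose_mat (U * M * transpose_mat V) = V * transpose_mat M * transpose_mat U"
  proof -
    have "transpose_mat (U * M * transpose_mat V) = V * transpose_mat (U * M)"
      using transpose_mult[OF UM VT] by simp
    also have "transpose_mat (U * M) = transpose_mat M * transpose_mat U" using transpose_mult[OF U M] .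
    finally show ?thesis using V MT UT by simp
  qed
  have "(U * M * transpose_mat V) * transpose_mat (U * M * transpose_mat V)
      = U * ((M * transpose_mat M) * transpose_mat U)"
  proof -
    have "(U * M * transpose_mat V) * (V * transpose_mat M * transpose_mat U)
        = U * (M * (transpose_mat V * (V * (transpose_mat M * transpose_mat U))))"
      using carrier_matD[OF U] carrier_matD[OF M] carrier_matD[OF V] by (simp add: assoc')
    also have "transpose_mat V * (V * (transpose_mat M * transpose_mat U)) = transpose_mat M * transpose_mat U"
      using carrier_matD[OF U] carrier_matD[OF M] carrier_matD[OF V] V1 by (simp add: cancel_l)
    also have "M * (transpose_mat M * transpose_mat U) = (M * transpose_mat M) * transpose_mat U"
      using M MT UT by simp
    finally show ?thesis by (simp only: t1)
  qed
  hence "fro2 (U * M * transpose_mat V) = tr (U * ((M * transpose_mat M) * transpose_mat U))"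
    unfolding fro2_tr[OF UMV] by (simp only:)
  also have "\<dots> = tr (((M * transpose_mat M) * transpose_mat U) * U)"
  proof -
    have X: "(M * transpose_mat M) * transpose_mat U \<in> carrier_mat m m" using MMT UT by (rule mult_carrier_mat)
    show ?thesis by (rule tr_comm[OF U X])
  qed
  also have "((M * transpose_mat M) * transpose_mat U) * U = M * transpose_mat M"
  proof -
    have "((M * transpose_mat M) * transpose_mat U) * U = (M * transpose_mat M) * (transpose_mat U * U)"
      by (rule assoc_mult_mat[OF MMT UT U])
    thus ?thesis unfolding U1 using right_mult_one_mat[OF MMT] by simp
  qed
  finally show ?thesis using fro2_tr[OF M] by simp
qed

lemma proots_lin_prod: "proots (\<Prod>a\<leftarrow>xs. [:- a, 1:]) = mset (xs :: real list)"
proof (induction xs)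
  case Nil thus ?case by simp
next
  case (Cons a xs)
  have nz: "(\<Prod>a\<leftarrow>xs. [:- a, 1:]) \<noteq> (0 :: real poly)"
    by (auto simp: prod_list_zero_iff)
  have eq: "(\<Prod>a\<leftarrow>(a#xs). [:- a, 1:]) = [:- a, 1:] * (\<Prod>a\<leftarrow>xs. [:- a, 1:])" by simp
  have "proots ([:- a, 1:] * (\<Prod>a\<leftarrow>xs. [:- a, 1:])) = proots [:- a, 1:] + proots (\<Prod>a\<leftarrow>xs. [:- a, 1:])"
    by (rule proots_mult) (simp, rule nz)
  also have "proots [:- a, 1:] = {#a#}" using proots_linear_factor[of "-a"] by simp
  finally show ?case unfolding eq using Cons by simp
qed

lemma sv_inv:
  fixes U V M :: "real mat"
  assumes U: "U \<in> carrier_mat m m" and V: "V \<in> carrier_mat n n" and M: "M \<in> carrier_mat m n"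
    and U1: "U * transpose_mat U = 1\<^sub>m m" and U2: "transpose_mat U * U = 1\<^sub>m m"
    and V1: "transpose_mat V * V = 1\<^sub>m n"
  shows "singular_values (U * M * transpose_mat V) = singular_values M"
proof -
  have UT: "transpose_mat U \<in> carrier_mat m m" and VT: "transpose_mat V \<in> carrier_mat n n"
    and MT: "transpose_mat M \<in> carrier_mat n m" using U V M by auto
  have UM: "U * M \<in> carrier_mat m n" using U M by (rule mult_carrier_mat)
  have MMT: "M * transpose_mat M \<in> carrier_mat m m" using M MT by (rule mult_carrier_mat)
  have t1: "transpose_mat (U * M * transpose_mat V) = V * transpose_mat M * transpose_mat U"
  proof -
    have "transpose_mat (U * M * transpose_mat V) = V * transpose_mat (U * M)"
      using transpose_mult[OF UM VT] by simp
    also have "transpose_mat (U * M) = transpose_mat M * transpose_mat U" using transpose_mult[OF U M] .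
    finally show ?thesis using V MT UT by simp
  qed
  have e: "(U * M * transpose_mat V) * transpose_mat (U * M * transpose_mat V)
      = U * (M * transpose_mat M) * transpose_mat U"
  proof -
    have "(U * M * transpose_mat V) * (V * transpose_mat M * transpose_mat U)
        = U * (M * (transpose_mat V * (V * (transpose_mat M * transpose_mat U))))"
      using carrier_matD[OF U] carrier_matD[OF M] carrier_matD[OF V] by (simp add: assoc')
    also have "transpose_mat V * (V * (transpose_mat M * transpose_mat U)) = transpose_mat M * transpose_mat U"
      using carrier_matD[OF U] carrier_matD[OF M] carrier_matD[OF V] V1 by (simp add: cancel_l)
    also have "U * (M * (transpose_mat M * transpose_mat U)) = U * (M * transpose_mat M) * transpose_mat U"
      using carrier_matD[OF U] carrier_matD[OF M] by (simp add: assoc')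
    finally show ?thesis unfolding t1 .
  qed
  have "similar_mat (U * (M * transpose_mat M) * transpose_mat U) (M * transpose_mat M)"
    unfolding similar_mat_def similar_mat_wit_def
    by (rule exI[of _ U], rule exI[of _ "transpose_mat U"]) (use U UT MMT U1 U2 in \<open>simp add: mult_carrier_mat Let_def\<close>)
  hence "char_poly ((U * M * transpose_mat V) * transpose_mat (U * M * transpose_mat V)) = char_poly (M * transpose_mat M)"
    unfolding e by (rule char_poly_similar)
  thus ?thesis unfolding singular_values_def by simp
qed

lemma sv_diag:
  fixes M W :: "real mat"
  assumes M: "M \<in> carrier_mat m n" and W: "W \<in> carrier_mat m m"
    and W1: "W * transpose_mat W = 1\<^sub>m m" and W2: "transpose_mat W * W = 1\<^sub>m m"
    and d: "diag_upto m m (transpose_mat W * (M * transpose_mat M) * W)"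
  shows "singular_values M = mset (map (\<lambda>j. sqrt ((transpose_mat W * (M * transpose_mat M) * W)$$(j,j))) [0..<m])"
proof -
  define A where "A = M * transpose_mat M"
  define L where "L = transpose_mat W * A * W"
  have Ac: "A \<in> carrier_mat m m" unfolding A_def using M by simp
  have WT: "transpose_mat W \<in> carrier_mat m m" using W by simp
  have Lc: "L \<in> carrier_mat m m" unfolding L_def using Ac W by simp
  have AL: "A = W * L * transpose_mat W"
  proof -
    show ?thesis unfolding L_def using carrier_matD[OF W] carrier_matD[OF Ac] W1
      by (simp add: assoc' cancel_l)
  qed
  have "similar_mat A L"
    unfolding similar_mat_def similar_mat_wit_def
    by (rule exI[of _ W], rule exI[of _ "transpose_mat W"]) (use W WT Lc Ac W1 W2 AL in \<open>simp add: Let_def\<close>)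
  hence cp: "char_poly A = char_poly L" by (rule char_poly_similar)
  have ut: "upper_triangular L" using d Lc unfolding upper_triangular_def diag_upto_def L_def A_def by auto
  have "char_poly L = (\<Prod>a\<leftarrow>diag_mat L. [:- a, 1:])" by (rule char_poly_upper_triangular[OF Lc ut])
  hence "proots (char_poly A) = mset (diag_mat L)" using cp proots_lin_prod by simp
  hence "singular_values M = mset (map sqrt (diag_mat L))"
    unfolding singular_values_def A_def[symmetric] by (simp only: mset_map)
  also have "map sqrt (diag_mat L) = map (\<lambda>j. sqrt (L$$(j,j))) [0..<m]"
    unfolding diag_mat_def map_map o_def using Lc by simp
  finally show ?thesis unfolding L_def A_def .
qed

lemma sum_list_filter_if: "sum_list (map f (filter P xs)) = sum_list (map (\<lambda>x. if P x then f x else (0::real)) xs)"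
  by (induction xs) simp_all

lemma TS1_list:
  assumes sv: "singular_values M = mset (map s [0..<m])" and s0: "\<And>j. j < m \<Longrightarrow> s j \<ge> 0" and a: "a > 0"
  shows "TS1 a M = (\<Sum>j<m. rho a (s j))"
proof -
  have "TS1 a M = sum_list (map (rho a) (filter (\<lambda>x. x > 0) (map s [0..<m])))"
    unfolding TS1_def sv by (simp only: mset_filter[symmetric] mset_map[symmetric] sum_mset_sum_list)
  also have "\<dots> = sum_list (map (\<lambda>x. if x > 0 then rho a x else 0) (map s [0..<m]))"
    by (rule sum_list_filter_if)
  also have "\<dots> = (\<Sum>j<m. if s j > 0 then rho a (s j) else 0)"
    by (simp add: sum_list_sum_nth atLeast0LessThan)
  also have "\<dots> = (\<Sum>j<m. rho a (s j))"
  proof (rule sum.cong)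
    fix j assume "j \<in> {..<m}"
    thus "(if s j > 0 then rho a (s j) else 0) = rho a (s j)"
      using s0[of j] by (auto simp: rho_def)
  qed simp
  finally show ?thesis .
qed




lemma amgm:
  fixes sg s w q P :: real
  assumes "sg \<ge> 0" "s \<ge> 0" "sg * s \<le> P"
  shows "sg * w * s * q \<le> P * (w^2 + q^2) / 2"
proof -
  have wq: "\<bar>w * q\<bar> \<le> (w^2 + q^2) / 2"
  proof -
    have "(\<bar>w\<bar> - \<bar>q\<bar>)^2 \<ge> 0" by simp
    hence "2 * (\<bar>w\<bar> * \<bar>q\<bar>) \<le> \<bar>w\<bar>^2 + \<bar>q\<bar>^2" by (simp add: power2_eq_square algebra_simps)
    thus ?thesis by (simp add: abs_mult)
  qed
  have P0: "P \<ge> 0" using assms by (meson mult_nonneg_nonneg order_trans)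
  have "sg * w * s * q = (sg * s) * (w * q)" by (simp add: algebra_simps)
  also have "\<dots> \<le> (sg * s) * \<bar>w * q\<bar>" using assms by (intro mult_left_mono) auto
  also have "\<dots> \<le> P * \<bar>w * q\<bar>" using assms by (intro mult_right_mono) auto
  also have "\<dots> \<le> P * ((w^2 + q^2) / 2)" using P0 wq
    by (intro mult_left_mono) auto
  finally show ?thesis by simp
qed

lemma dss:
  fixes \<psi> \<phi> :: "nat \<Rightarrow> real" and A :: "nat \<Rightarrow> nat \<Rightarrow> real"
  assumes p0: "\<And>i. i<m \<Longrightarrow> \<psi> i \<ge> 0" and f0: "\<And>j. j<m \<Longrightarrow> \<phi> j \<ge> 0"
    and R: "\<And>i. i<m \<Longrightarrow> (\<Sum>j<m. A i j) \<le> 2" and C: "\<And>j. j<m \<Longrightarrow> (\<Sum>i<m. A i j) \<le> 2"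
  shows "(\<Sum>i<m. \<Sum>j<m. (\<psi> i + \<phi> j) * A i j / 2) \<le> (\<Sum>i<m. \<psi> i) + (\<Sum>j<m. \<phi> j)"
proof -
  have "(\<Sum>i<m. \<Sum>j<m. (\<psi> i + \<phi> j) * A i j / 2)
      = (\<Sum>i<m. \<psi> i * ((\<Sum>j<m. A i j) / 2)) + (\<Sum>i<m. \<Sum>j<m. \<phi> j * A i j / 2)"
    by (simp add: distrib_right add_divide_distrib sum.distrib sum_distrib_left sum_divide_distrib mult.assoc)
  also have "(\<Sum>i<m. \<Sum>j<m. \<phi> j * A i j / 2) = (\<Sum>j<m. \<phi> j * ((\<Sum>i<m. A i j) / 2))"
    by (subst sum.swap) (simp add: sum_distrib_left sum_divide_distrib)
  also have "(\<Sum>i<m. \<psi> i * ((\<Sum>j<m. A i j) / 2)) \<le> (\<Sum>i<m. \<psi> i)"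
  proof (rule sum_mono)
    fix i assume "i \<in> {..<m}"
    hence i: "i < m" by simp
    show "\<psi> i * ((\<Sum>j<m. A i j) / 2) \<le> \<psi> i"
      using mult_left_mono[of "(\<Sum>j<m. A i j) / 2" 1 "\<psi> i"] R[OF i] p0[OF i] by simp
  qed
  also have "(\<Sum>j<m. \<phi> j * ((\<Sum>i<m. A i j) / 2)) \<le> (\<Sum>j<m. \<phi> j)"
  proof (rule sum_mono)
    fix j assume "j \<in> {..<m}"
    hence j: "j < m" by simp
    show "\<phi> j * ((\<Sum>i<m. A i j) / 2) \<le> \<phi> j"
      using mult_left_mono[of "(\<Sum>i<m. A i j) / 2" 1 "\<phi> j"] C[OF j] f0[OF j] by simp
  qed
  finally show ?thesis by simp
qed


lemma core:
  fixes Z W :: "real mat" and sg \<psi> :: "nat \<Rightarrow> real" and \<phi> :: "real \<Rightarrow> real"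
  assumes Z: "Z \<in> carrier_mat m n" and mn: "m \<le> n" and W: "W \<in> carrier_mat m m"
    and W1: "W * transpose_mat W = 1\<^sub>m m" and W2: "transpose_mat W * W = 1\<^sub>m m"
    and d: "diag_upto m m (transpose_mat W * (Z * transpose_mat Z) * W)"
    and sg0: "\<And>i. i<m \<Longrightarrow> sg i \<ge> 0" and p0: "\<And>i. i<m \<Longrightarrow> \<psi> i \<ge> 0"
    and f0: "\<And>y. y \<ge> 0 \<Longrightarrow> \<phi> y \<ge> 0"
    and fy: "\<And>i y. i<m \<Longrightarrow> y \<ge> 0 \<Longrightarrow> sg i * y \<le> \<psi> i + \<phi> y"
  shows "(\<Sum>i<m. sg i * Z$$(i,i)) \<le> (\<Sum>i<m. \<psi> i)
           + (\<Sum>j<m. \<phi> (sqrt ((transpose_mat W * (Z * transpose_mat Z) * W)$$(j,j))))"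
proof -
  define L where "L = transpose_mat W * (Z * transpose_mat Z) * W"
  define B where "B = transpose_mat W * Z"
  have WT: "transpose_mat W \<in> carrier_mat m m" using W by simp
  have ZT: "transpose_mat Z \<in> carrier_mat n m" using Z by simp
  have Bc: "B \<in> carrier_mat m n" unfolding B_def using WT Z by (rule mult_carrier_mat)
  have BTc: "transpose_mat B \<in> carrier_mat n m" using Bc by simp
  have BT: "transpose_mat B = transpose_mat Z * W"
    unfolding B_def using transpose_mult[OF WT Z] by simp
  have LB: "L = B * transpose_mat B"
    unfolding L_def BT unfolding B_def using carrier_matD[OF W] carrier_matD[OF Z] by (simp add: assoc')
  have Lent: "L$$(j,k) = (\<Sum>l<n. B$$(j,l) * B$$(k,l))" if "j<m" "k<m" for j k
  proof -
    have "L$$(j,k) = (\<Sum>l<n. B$$(j,l) * transpose_mat B$$(l,k))" unfolding LB using mult_entry[OF Bc BTc that] .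
    also have "\<dots> = (\<Sum>l<n. B$$(j,l) * B$$(k,l))" using Bc that by (intro sum.cong) auto
    finally show ?thesis .
  qed
  define \<mu> where "\<mu> = (\<lambda>j. L$$(j,j))"
  have \<mu>e: "\<mu> j = (\<Sum>l<n. (B$$(j,l))^2)" if "j<m" for j
    unfolding \<mu>_def using Lent[OF that that] by (simp add: power2_eq_square)
  have \<mu>0: "\<mu> j \<ge> 0" if "j<m" for j using \<mu>e[OF that] by (simp add: sum_nonneg)
  define s where "s = (\<lambda>j. sqrt (\<mu> j))"
  have s0: "s j \<ge> 0" if "j<m" for j unfolding s_def using \<mu>0[OF that] by simp
  have s2: "(s j)^2 = \<mu> j" if "j<m" for j unfolding s_def using \<mu>0[OF that] by simp
  define Q where "Q = (\<lambda>j l. if \<mu> j > 0 then B$$(j,l) / s j else 0)"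
  have Qz: "Q j l = 0" if "\<not> \<mu> j > 0" for j l unfolding Q_def using that by simp
  have BQ: "B$$(j,l) = s j * Q j l" if j: "j<m" and l: "l<n" for j l
  proof (cases "\<mu> j > 0")
    case True
    hence "s j > 0" unfolding s_def by simp
    thus ?thesis unfolding Q_def using True by simp
  next
    case False
    hence "\<mu> j = 0" using \<mu>0[OF j] by simp
    hence "(\<Sum>l<n. (B$$(j,l))^2) = 0" using \<mu>e[OF j] by simp
    hence "\<forall>l\<in>{..<n}. (B$$(j,l))^2 = 0" by (subst (asm) sum_nonneg_eq_0_iff) auto
    hence "B$$(j,l) = 0" using l by simp
    thus ?thesis using Qz[OF False] by simp
  qed
  have QQ: "(\<Sum>l<n. Q j l * Q k l) = (if j = k \<and> \<mu> j > 0 then 1 else 0)" if j: "j<m" and k: "k<m" for j k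
  proof (cases "\<mu> j > 0 \<and> \<mu> k > 0")
    case True
    hence sj: "s j > 0" and sk: "s k > 0" unfolding s_def by auto
    have "(\<Sum>l<n. Q j l * Q k l) = (\<Sum>l<n. B$$(j,l) * B$$(k,l)) / (s j * s k)"
      unfolding Q_def sum_divide_distrib using True by (intro sum.cong) auto
    also have "\<dots> = L$$(j,k) / (s j * s k)" using Lent[OF j k] by simp
    also have "\<dots> = (if j = k \<and> \<mu> j > 0 then 1 else 0)"
    proof (cases "j = k")
      case True
      hence "L$$(j,k) = (s j)^2" using s2[OF j] \<mu>_def by simp
      thus ?thesis using True sj \<open>\<mu> j > 0 \<and> \<mu> k > 0\<close> by (simp add: power2_eq_square)
    next
      case False
      hence "L$$(j,k) = 0" using d j k unfolding diag_upto_def L_def by auto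
      thus ?thesis using False by simp
    qed
    finally show ?thesis .
  next
    case False
    hence "(\<Sum>l<n. Q j l * Q k l) = 0" using Qz by (intro sum.neutral) auto
    thus ?thesis using False by auto
  qed
  have rowQ: "(\<Sum>l<n. (Q j l)^2) \<le> 1" if j: "j<m" for j
    using QQ[OF j j] by (simp add: power2_eq_square split: if_splits)
  have colQ: "(\<Sum>j<m. (Q j l)^2) \<le> 1" if l: "l<n" for l
  proof -
    define t where "t = (\<Sum>j<m. (Q j l)^2)"
    have t0: "t \<ge> 0" unfolding t_def by (simp add: sum_nonneg)
    have "(\<Sum>l'<n. (\<Sum>j<m. Q j l * Q j l')^2)
        = (\<Sum>l'<n. \<Sum>j<m. \<Sum>k<m. Q j l * Q k l * (Q j l' * Q k l'))"
      by (rule sum.cong[OF refl]) (simp add: power2_eq_square sum_product mult_ac)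
    also have "\<dots> = (\<Sum>j<m. \<Sum>l'<n. \<Sum>k<m. Q j l * Q k l * (Q j l' * Q k l'))"
      by (rule sum.swap)
    also have "\<dots> = (\<Sum>j<m. \<Sum>k<m. \<Sum>l'<n. Q j l * Q k l * (Q j l' * Q k l'))"
      by (rule sum.cong[OF refl], rule sum.swap)
    also have "\<dots> = (\<Sum>j<m. \<Sum>k<m. Q j l * Q k l * (if j = k \<and> \<mu> j > 0 then 1 else 0))"
      by (intro sum.cong refl) (simp add: sum_distrib_left[symmetric] QQ)
    also have "\<dots> = (\<Sum>j<m. Q j l * Q j l * (if \<mu> j > 0 then 1 else 0))"
    proof (rule sum.cong, simp)
      fix j assume "j \<in> {..<m}"
      have "(\<Sum>k<m. Q j l * Q k l * (if j = k \<and> \<mu> j > 0 then 1 else 0))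
          = (\<Sum>k<m. if k = j then Q j l * Q j l * (if \<mu> j > 0 then 1 else 0) else 0)"
        by (intro sum.cong) auto
      also have "\<dots> = Q j l * Q j l * (if \<mu> j > 0 then 1 else 0)" using \<open>j \<in> {..<m}\<close> by simp
      finally show "(\<Sum>k<m. Q j l * Q k l * (if j = k \<and> \<mu> j > 0 then 1 else 0))
          = Q j l * Q j l * (if \<mu> j > 0 then 1 else 0)" .
    qed
    also have "\<dots> = t" unfolding t_def using Qz by (intro sum.cong) (auto simp: power2_eq_square)
    finally have key: "(\<Sum>l'<n. (\<Sum>j<m. Q j l * Q j l')^2) = t" .
    have "t^2 = (\<Sum>j<m. Q j l * Q j l)^2" unfolding t_def by (simp add: power2_eq_square)
    also have "\<dots> \<le> (\<Sum>l'<n. (\<Sum>j<m. Q j l * Q j l')^2)"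
      by (rule member_le_sum[where f = "\<lambda>l'. (\<Sum>j<m. Q j l * Q j l')^2"]) (use l in auto)
    finally have "t^2 \<le> t" using key by simp
    hence tt: "t * t \<le> t" by (simp add: power2_eq_square)
    have "t \<le> 1"
    proof (rule ccontr)
      assume "\<not> t \<le> 1"
      hence "t * 1 < t * t" by (intro mult_strict_left_mono) auto
      thus False using tt by simp
    qed
    thus ?thesis unfolding t_def .
  qed
  have rowW: "(\<Sum>j<m. (W$$(i,j))^2) = 1" if i: "i<m" for i
  proof -
    have "(W * transpose_mat W)$$(i,i) = (\<Sum>j<m. W$$(i,j) * transpose_mat W$$(j,i))"
      using mult_entry[OF W WT i i] .
    also have "\<dots> = (\<Sum>j<m. (W$$(i,j))^2)" using W i by (intro sum.cong) (auto simp: power2_eq_square)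
    finally show ?thesis using W1 i by simp
  qed
  have colW: "(\<Sum>i<m. (W$$(i,j))^2) = 1" if j: "j<m" for j
  proof -
    have "(transpose_mat W * W)$$(j,j) = (\<Sum>i<m. transpose_mat W$$(j,i) * W$$(i,j))"
      using mult_entry[OF WT W j j] .
    also have "\<dots> = (\<Sum>i<m. (W$$(i,j))^2)" using W j by (intro sum.cong) (auto simp: power2_eq_square)
    finally show ?thesis using W2 j by simp
  qed
  have ZWB: "W * B = Z" unfolding B_def
    using cancel_l[OF W1] carrier_matD[OF W] carrier_matD[OF Z] by simp
  have Zii: "Z$$(i,i) = (\<Sum>j<m. W$$(i,j) * (s j * Q j i))" if i: "i<m" for i
  proof -
    have i': "i < n" using i mn by simp
    have "Z$$(i,i) = (\<Sum>j<m. W$$(i,j) * B$$(j,i))" using mult_entry[OF W Bc i i'] ZWB by simp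
    also have "\<dots> = (\<Sum>j<m. W$$(i,j) * (s j * Q j i))" using BQ i' by (intro sum.cong) auto
    finally show ?thesis .
  qed
  define A where "A = (\<lambda>i j. (W$$(i,j))^2 + (Q j i)^2)"
  have "(\<Sum>i<m. sg i * Z$$(i,i)) = (\<Sum>i<m. \<Sum>j<m. sg i * W$$(i,j) * s j * Q j i)"
    using Zii by (simp add: sum_distrib_left mult.assoc)
  also have "\<dots> \<le> (\<Sum>i<m. \<Sum>j<m. (\<psi> i + \<phi> (s j)) * A i j / 2)"
    unfolding A_def using amgm sg0 s0 fy by (intro sum_mono) auto
  also have "\<dots> \<le> (\<Sum>i<m. \<psi> i) + (\<Sum>j<m. \<phi> (s j))"
  proof (rule dss[of m \<psi> "\<lambda>j. \<phi> (s j)" A])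
    show "\<And>i. i<m \<Longrightarrow> \<psi> i \<ge> 0" by (rule p0)
    show "\<And>j. j<m \<Longrightarrow> \<phi> (s j) \<ge> 0" using f0 s0 by simp
    show "(\<Sum>j<m. A i j) \<le> 2" if i: "i<m" for i
    proof -
      have "(\<Sum>j<m. A i j) = (\<Sum>j<m. (W$$(i,j))^2) + (\<Sum>j<m. (Q j i)^2)" unfolding A_def by (simp add: sum.distrib)
      thus ?thesis using rowW[OF i] colQ[of i] i mn by simp
    qed
    show "(\<Sum>i<m. A i j) \<le> 2" if j: "j<m" for j
    proof -
      have "(\<Sum>i<m. (Q j i)^2) \<le> (\<Sum>i<n. (Q j i)^2)"
        using mn by (intro sum_mono2) auto
      hence "(\<Sum>i<m. (Q j i)^2) \<le> 1" using rowQ[OF j] by simp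
      moreover have "(\<Sum>i<m. A i j) = (\<Sum>i<m. (W$$(i,j))^2) + (\<Sum>i<m. (Q j i)^2)" unfolding A_def by (simp add: sum.distrib)
      ultimately show ?thesis using colW[OF j] by simp
    qed
  qed
  finally show ?thesis unfolding s_def \<mu>_def L_def .
qed




lemma g_opt:
  fixes a lam x :: real
  assumes a: "a > 0" and l: "lam > 0" and x: "x \<ge> 0"
  shows "g_fun lam a x \<ge> 0 \<and> (\<forall>y\<ge>0. 1/2*(g_fun lam a x - x)^2 + lam * rho a (g_fun lam a x)
            \<le> 1/2*(y-x)^2 + lam * rho a y)"
proof (cases "x \<le> thr lam a")
  case True
  hence g: "g_fun lam a x = 0" unfolding g_fun_def using x by simp
  have r0: "rho a 0 = 0" unfolding rho_def by simp
  show ?thesis unfolding g r0 using small_case[OF a l _ True] by simp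
next
  case False
  hence g: "g_fun lam a x = h_fun lam a x" unfolding g_fun_def using x by simp
  show ?thesis unfolding g using big_case[OF a l] False by simp
qed

lemma rho_nonneg: "a > 0 \<Longrightarrow> y \<ge> 0 \<Longrightarrow> rho a y \<ge> 0"
  unfolding rho_def by simp

lemma row_delta:
  fixes z :: "nat \<Rightarrow> real"
  assumes i: "i < n"
  shows "(\<Sum>j<n. (z j - (if i = j then c else 0))^2) = (\<Sum>j<n. (z j)^2) - 2 * (z i * c) + c^2"
proof -
  define d where "d = (\<lambda>j. if i = j then c else (0::real))"
  have "(\<Sum>j<n. (z j - d j)^2) = (\<Sum>j<n. (z j)^2 - 2 * (z j * d j) + (d j)^2)"
    by (rule sum.cong) (simp_all add: power2_eq_square algebra_simps)
  also have "\<dots> = (\<Sum>j<n. (z j)^2) - 2 * (\<Sum>j<n. z j * d j) + (\<Sum>j<n. (d j)^2)"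
    by (simp add: sum.distrib sum_subtractf sum_distrib_left)
  also have "(\<Sum>j<n. z j * d j) = (\<Sum>j<n. if i = j then z i * c else 0)"
    unfolding d_def by (rule sum.cong) auto
  also have "\<dots> = z i * c" using i by simp
  also have "(\<Sum>j<n. (d j)^2) = (\<Sum>j<n. if i = j then c^2 else 0)"
    unfolding d_def by (rule sum.cong) auto
  also have "\<dots> = c^2" using i by simp
  finally show ?thesis unfolding d_def .
qed

lemma diag_rect_entry: "i < m \<Longrightarrow> j < n \<Longrightarrow> diag_rect m n c $$ (i,j) = (if i = j then c i else 0)"
  unfolding diag_rect_def by simp

lemma diag_rect_carrier: "diag_rect m n c \<in> carrier_mat m n"
  unfolding diag_rect_def by simp

lemma fro2_minus_diag:
  assumes Z: "Z \<in> carrier_mat m n" and mn: "m \<le> n"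
  shows "fro2 (Z - diag_rect m n c) = fro2 Z - 2 * (\<Sum>i<m. c i * Z$$(i,i)) + (\<Sum>i<m. (c i)^2)"
proof -
  have "fro2 (Z - diag_rect m n c) = (\<Sum>i<m. \<Sum>j<n. (Z$$(i,j) - (if i = j then c i else 0))^2)"
    unfolding fro2_def using Z diag_rect_carrier[of m n c] by (simp add: diag_rect_entry)
  also have "\<dots> = (\<Sum>i<m. (\<Sum>j<n. (Z$$(i,j))^2) - 2 * (Z$$(i,i) * c i) + (c i)^2)"
    by (rule sum.cong[OF refl], rule row_delta) (use mn in auto)
  also have "\<dots> = fro2 Z - 2 * (\<Sum>i<m. c i * Z$$(i,i)) + (\<Sum>i<m. (c i)^2)"
    unfolding fro2_def using Z by (simp add: sum_subtractf sum.distrib sum_distrib_left mult.commute)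
  finally show ?thesis .
qed

lemma fro2_diag:
  assumes mn: "m \<le> n"
  shows "fro2 (diag_rect m n c) = (\<Sum>i<m. (c i)^2)"
proof -
  have "fro2 (diag_rect m n c) = (\<Sum>i<m. \<Sum>j<n. (if i = j then c i else 0)^2)"
    unfolding fro2_def using diag_rect_carrier[of m n c] by (simp add: diag_rect_entry)
  also have "\<dots> = (\<Sum>i<m. (c i)^2)"
  proof (rule sum.cong[OF refl])
    fix i assume "i \<in> {..<m}"
    hence i: "i < n" using mn by simp
    have "(\<Sum>j<n. (if i = j then c i else 0)^2) = (\<Sum>j<n. if i = j then (c i)^2 else 0)"
      by (rule sum.cong) auto
    thus "(\<Sum>j<n. (if i = j then c i else 0)^2) = (c i)^2" using i by simp
  qed
  finally show ?thesis .
qed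

lemma L_facts:
  fixes Z W :: "real mat"
  assumes Z: "Z \<in> carrier_mat m n" and W: "W \<in> carrier_mat m m"
    and W1: "W * transpose_mat W = 1\<^sub>m m"
  shows "\<And>j. j < m \<Longrightarrow> (transpose_mat W * (Z * transpose_mat Z) * W)$$(j,j) \<ge> 0"
    and "fro2 Z = (\<Sum>j<m. (transpose_mat W * (Z * transpose_mat Z) * W)$$(j,j))"
proof -
  define L where "L = transpose_mat W * (Z * transpose_mat Z) * W"
  define B where "B = transpose_mat W * Z"
  have WT: "transpose_mat W \<in> carrier_mat m m" using W by simp
  have ZT: "transpose_mat Z \<in> carrier_mat n m" using Z by simp
  have Bc: "B \<in> carrier_mat m n" unfolding B_def using WT Z by (rule mult_carrier_mat)
  have BTc: "transpose_mat B \<in> carrier_mat n m" using Bc by simp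
  have BT: "transpose_mat B = transpose_mat Z * W"
    unfolding B_def using transpose_mult[OF WT Z] by simp
  have LB: "L = B * transpose_mat B"
    unfolding L_def BT unfolding B_def using carrier_matD[OF W] carrier_matD[OF Z] by (simp add: assoc')
  show "L$$(j,j) \<ge> 0" if j: "j < m" for j
  proof -
    have "L$$(j,j) = (\<Sum>l<n. B$$(j,l) * transpose_mat B$$(l,j))" unfolding LB using mult_entry[OF Bc BTc j j] .
    also have "\<dots> = (\<Sum>l<n. (B$$(j,l))^2)" using Bc j by (intro sum.cong) (auto simp: power2_eq_square)
    finally show ?thesis by (simp add: sum_nonneg)
  qed
  have ZZc: "Z * transpose_mat Z \<in> carrier_mat m m" using Z ZT by (rule mult_carrier_mat)
  have X: "(Z * transpose_mat Z) * W \<in> carrier_mat m m" using ZZc W by (rule mult_carrier_mat)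
  have "(\<Sum>j<m. L$$(j,j)) = tr L"
    unfolding tr_def L_def using WT ZZc W by simp
  also have "tr L = tr (transpose_mat W * ((Z * transpose_mat Z) * W))" unfolding L_def
    using assoc_mult_mat[OF WT ZZc W] by simp
  also have "\<dots> = tr (((Z * transpose_mat Z) * W) * transpose_mat W)"
    by (rule tr_comm[OF WT X])
  also have "((Z * transpose_mat Z) * W) * transpose_mat W = Z * transpose_mat Z"
    using assoc_mult_mat[OF ZZc W WT] W1 right_mult_one_mat[OF ZZc] by simp
  finally show "fro2 Z = (\<Sum>j<m. L$$(j,j))" using fro2_tr[OF Z] by simp
qed




theorem theorem3:
  fixes m n :: nat and a lam :: real and Y U V :: "real mat" and \<sigma> :: "nat \<Rightarrow> real"
  assumes "m \<le> n" and "a > 0" and "lam > 0"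
    and "Y \<in> carrier_mat m n" and "U \<in> carrier_mat m m" and "V \<in> carrier_mat n n"
    and "U * transpose_mat U = 1\<^sub>m m" and "transpose_mat U * U = 1\<^sub>m m"
    and "V * transpose_mat V = 1\<^sub>m n" and "transpose_mat V * V = 1\<^sub>m n"
    and "\<And>i j. i \<le> j \<Longrightarrow> j < m \<Longrightarrow> \<sigma> j \<le> \<sigma> i"
    and "\<And>i. i < m \<Longrightarrow> \<sigma> i \<ge> 0"
    and "Y = U * diag_rect m n \<sigma> * transpose_mat V"
  shows "\<forall>X \<in> carrier_mat m n.
    1/2 * (frob_norm (U * diag_rect m n (\<lambda>i. g_fun lam a (\<sigma> i)) * transpose_mat V - Y))\<^sup>2
      + lam * TS1 a (U * diag_rect m n (\<lambda>i. g_fun lam a (\<sigma> i)) * transpose_mat V)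
    \<le> 1/2 * (frob_norm (X - Y))\<^sup>2 + lam * TS1 a X"
proof
  note mn = assms(1) and a = assms(2) and l = assms(3) and Yc = assms(4) and U = assms(5)
    and V = assms(6) and U1 = assms(7) and U2 = assms(8) and V1 = assms(9) and V2 = assms(10)
    and s0 = assms(12) and Ydef = assms(13)
  fix X :: "real mat" assume X: "X \<in> carrier_mat m n"
  define g where "g = (\<lambda>i. g_fun lam a (\<sigma> i))"
  define G where "G = diag_rect m n g"
  define D where "D = diag_rect m n \<sigma>"
  define f where "f = (\<lambda>i. 1/2 * (g i - \<sigma> i)^2 + lam * rho a (g i))"
  have Gc: "G \<in> carrier_mat m n" unfolding G_def by (rule diag_rect_carrier)
  have Dc: "D \<in> carrier_mat m n" unfolding D_def by (rule diag_rect_carrier)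
  have UT: "transpose_mat U \<in> carrier_mat m m" and VT: "transpose_mat V \<in> carrier_mat n n"
    using U V by auto
  have gopt: "g i \<ge> 0 \<and> (\<forall>y\<ge>0. f i \<le> 1/2*(y - \<sigma> i)^2 + lam * rho a y)" if i: "i < m" for i
    unfolding f_def g_def using g_opt[OF a l s0[OF i]] by simp
  have r0: "rho a 0 = 0" unfolding rho_def by simp
  have diffU: "U * M * transpose_mat V - U * D * transpose_mat V = U * (M - D) * transpose_mat V"
    if M: "M \<in> carrier_mat m n" for M
  proof -
    have UM: "U * M \<in> carrier_mat m n" using U M by (rule mult_carrier_mat)
    have UD: "U * D \<in> carrier_mat m n" using U Dc by (rule mult_carrier_mat)
    have "U * (M - D) = U * M - U * D" by (rule mult_minus_distrib_mat[OF U M Dc])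
    hence "U * (M - D) * transpose_mat V = (U * M - U * D) * transpose_mat V" by simp
    also have "\<dots> = U * M * transpose_mat V - U * D * transpose_mat V"
      by (rule minus_mult_distrib_mat[OF UM UD VT])
    finally show ?thesis by simp
  qed
  have GD: "G - D \<in> carrier_mat m n" by (rule minus_carrier_mat[OF Dc])
  have Gii: "G$$(i,i) = g i" if "i < m" for i unfolding G_def using that mn by (simp add: diag_rect_entry)
  have lhs1: "(frob_norm (U * G * transpose_mat V - Y))^2 = (\<Sum>i<m. (g i - \<sigma> i)^2)"
  proof -
    have "(frob_norm (U * G * transpose_mat V - Y))^2 = fro2 (U * (G - D) * transpose_mat V)"
      unfolding frob_sq Ydef D_def[symmetric] diffU[OF Gc] ..
    also have "\<dots> = fro2 (G - D)" by (rule fro2_inv[OF U V GD U2 V2])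
    also have "\<dots> = fro2 G - 2 * (\<Sum>i<m. \<sigma> i * G$$(i,i)) + (\<Sum>i<m. (\<sigma> i)^2)"
      unfolding D_def by (rule fro2_minus_diag[OF Gc mn])
    also have "fro2 G = (\<Sum>i<m. (g i)^2)" unfolding G_def by (rule fro2_diag[OF mn])
    also have "(\<Sum>i<m. \<sigma> i * G$$(i,i)) = (\<Sum>i<m. \<sigma> i * g i)" using Gii by simp
    finally show ?thesis
      by (simp add: power2_eq_square algebra_simps sum_subtractf sum.distrib sum_distrib_left)
  qed
  have GGT: "(G * transpose_mat G)$$(i,j) = (if i = j then (g i)^2 else 0)" if "i<m" "j<m" for i j
  proof -
    have GTc: "transpose_mat G \<in> carrier_mat n m" using Gc by simp
    have "(G * transpose_mat G)$$(i,j) = (\<Sum>l<n. G$$(i,l) * transpose_mat G$$(l,j))"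
      using mult_entry[OF Gc GTc that] .
    also have "\<dots> = (\<Sum>l<n. if l = i then (if i = j then (g i)^2 else 0) else 0)"
      using that Gc unfolding G_def by (intro sum.cong) (auto simp: diag_rect_entry power2_eq_square)
    also have "\<dots> = (if i = j then (g i)^2 else 0)" using that mn by simp
    finally show ?thesis .
  qed
  have GGc: "G * transpose_mat G \<in> carrier_mat m m" using Gc by simp
  have one_sim: "transpose_mat (1\<^sub>m m) * (G * transpose_mat G) * 1\<^sub>m m = G * transpose_mat G"
    using left_mult_one_mat[OF GGc] right_mult_one_mat[OF GGc] by simp
  have svG: "singular_values G = mset (map (\<lambda>j. sqrt ((transpose_mat (1\<^sub>m m) * (G * transpose_mat G) * 1\<^sub>m m)$$(j,j))) [0..<m])"
  proof -
    have dG: "diag_upto m m (transpose_mat (1\<^sub>m m) * (G * transpose_mat G) * 1\<^sub>m m)"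
      unfolding one_sim diag_upto_def using GGT by simp
    show ?thesis by (rule sv_diag[OF Gc one_carrier_mat _ _ dG]) simp_all
  qed
  have TG: "TS1 a (U * G * transpose_mat V) = (\<Sum>j<m. rho a (g j))"
  proof -
    have "TS1 a (U * G * transpose_mat V) = TS1 a G"
      unfolding TS1_def sv_inv[OF U V Gc U1 U2 V2] ..
    also have "\<dots> = (\<Sum>j<m. rho a (sqrt ((transpose_mat (1\<^sub>m m) * (G * transpose_mat G) * 1\<^sub>m m)$$(j,j))))"
      by (rule TS1_list[OF svG _ a]) (simp only: one_sim, simp add: GGT)
    also have "\<dots> = (\<Sum>j<m. rho a (g j))"
      by (rule sum.cong[OF refl]) (simp only: one_sim, use gopt in \<open>auto simp: GGT\<close>)
    finally show ?thesis .
  qed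
  have LHS: "1/2 * (frob_norm (U * G * transpose_mat V - Y))^2 + lam * TS1 a (U * G * transpose_mat V)
      = (\<Sum>i<m. f i)"
    unfolding lhs1 TG f_def by (simp add: sum.distrib sum_distrib_left)
  define Z where "Z = transpose_mat U * X * V"
  have Zc: "Z \<in> carrier_mat m n" unfolding Z_def using UT X V by simp
  have XZ: "X = U * Z * transpose_mat V"
    unfolding Z_def using carrier_matD[OF U] carrier_matD[OF V] carrier_matD[OF X] U1 V1
    by (simp add: assoc' cancel_l)
  have rhs1: "(frob_norm (X - Y))^2 = fro2 Z - 2 * (\<Sum>i<m. \<sigma> i * Z$$(i,i)) + (\<Sum>i<m. (\<sigma> i)^2)"
  proof -
    have "(frob_norm (X - Y))^2 = fro2 (U * (Z - D) * transpose_mat V)"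
      unfolding frob_sq Ydef D_def[symmetric] diffU[OF Zc, symmetric] XZ[symmetric] ..
    also have "\<dots> = fro2 (Z - D)" by (rule fro2_inv[OF U V minus_carrier_mat[OF Dc] U2 V2])
    also have "\<dots> = fro2 Z - 2 * (\<Sum>i<m. \<sigma> i * Z$$(i,i)) + (\<Sum>i<m. (\<sigma> i)^2)"
      unfolding D_def by (rule fro2_minus_diag[OF Zc mn])
    finally show ?thesis .
  qed
  have ZZc: "Z * transpose_mat Z \<in> carrier_mat m m" using Zc by simp
  have ZZT: "transpose_mat (Z * transpose_mat Z) = Z * transpose_mat Z"
    using transpose_mult[OF Zc, of "transpose_mat Z" m] Zc by simp
  obtain W where W: "W \<in> carrier_mat m m" and W1: "W * transpose_mat W = 1\<^sub>m m"
    and W2: "transpose_mat W * W = 1\<^sub>m m" and dW: "diag_upto m m (transpose_mat W * (Z * transpose_mat Z) * W)"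
    using spectral[OF ZZc ZZT] by blast
  define Lj where "Lj = (\<lambda>j. (transpose_mat W * (Z * transpose_mat Z) * W)$$(j,j))"
  have Lj0: "Lj j \<ge> 0" if "j<m" for j unfolding Lj_def by (rule L_facts(1)[OF Zc W W1 that])
  have fZ: "fro2 Z = (\<Sum>j<m. Lj j)" unfolding Lj_def by (rule L_facts(2)[OF Zc W W1])
  have svZ: "singular_values Z = mset (map (\<lambda>j. sqrt (Lj j)) [0..<m])"
    unfolding Lj_def by (rule sv_diag[OF Zc W W1 W2 dW])
  have TX: "TS1 a X = (\<Sum>j<m. rho a (sqrt (Lj j)))"
  proof -
    have "TS1 a X = TS1 a Z" unfolding TS1_def XZ sv_inv[OF U V Zc U1 U2 V2] ..
    also have "\<dots> = (\<Sum>j<m. rho a (sqrt (Lj j)))" by (rule TS1_list[OF svZ _ a]) (use Lj0 in simp)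
    finally show ?thesis .
  qed
  define \<psi> where "\<psi> = (\<lambda>i. 1/2 * (\<sigma> i)^2 - f i)"
  define \<phi> where "\<phi> = (\<lambda>y::real. 1/2 * y^2 + lam * rho a y)"
  have core_app: "(\<Sum>i<m. \<sigma> i * Z$$(i,i)) \<le> (\<Sum>i<m. \<psi> i)
           + (\<Sum>j<m. \<phi> (sqrt (Lj j)))"
    unfolding Lj_def
  proof (rule core[OF Zc mn W W1 W2 dW])
    show "\<And>i. i<m \<Longrightarrow> \<sigma> i \<ge> 0" by (rule s0)
    show "\<psi> i \<ge> 0" if i: "i<m" for i
      using gopt[OF i] r0 unfolding \<psi>_def by (auto simp: power2_eq_square)
    show "\<phi> y \<ge> 0" if "y \<ge> 0" for y
      unfolding \<phi>_def using rho_nonneg[OF a that] l by simp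
    show "\<sigma> i * y \<le> \<psi> i + \<phi> y" if i: "i<m" and y: "y \<ge> 0" for i y
    proof -
      have "f i \<le> 1/2*(y - \<sigma> i)^2 + lam * rho a y" using gopt[OF i] y by blast
      thus ?thesis unfolding \<psi>_def \<phi>_def by (simp add: power2_eq_square algebra_simps)
    qed
  qed
  have sp: "(\<Sum>i<m. \<psi> i) = 1/2 * (\<Sum>i<m. (\<sigma> i)^2) - (\<Sum>i<m. f i)"
    unfolding \<psi>_def by (simp add: sum_subtractf sum_distrib_left)
  have sf: "(\<Sum>j<m. \<phi> (sqrt (Lj j))) = 1/2 * (\<Sum>j<m. Lj j) + lam * (\<Sum>j<m. rho a (sqrt (Lj j)))"
  proof -
    have "(\<Sum>j<m. \<phi> (sqrt (Lj j))) = (\<Sum>j<m. 1/2 * Lj j + lam * rho a (sqrt (Lj j)))"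
      unfolding \<phi>_def using Lj0 by (intro sum.cong) auto
    thus ?thesis by (simp add: sum.distrib sum_distrib_left)
  qed
  have "(\<Sum>i<m. f i) \<le> 1/2 * (frob_norm (X - Y))\<^sup>2 + lam * TS1 a X"
  proof -
    define S where "S = (\<Sum>i<m. \<sigma> i * Z$$(i,i))"
    define C where "C = (\<Sum>i<m. (\<sigma> i)^2)"
    define K where "K = (\<Sum>j<m. Lj j)"
    define R where "R = (\<Sum>j<m. rho a (sqrt (Lj j)))"
    have e: "1/2 * (K - 2 * S + C) = 1/2 * K - S + 1/2 * C" by (simp add: algebra_simps)
    have "(\<Sum>i<m. f i) \<le> 1/2 * (K - 2 * S + C) + lam * R"
      unfolding e using core_app sp sf unfolding S_def C_def K_def R_def by linarith
    thus ?thesis unfolding rhs1 TX fZ S_def C_def K_def R_def .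
  qed
  thus "1/2 * (frob_norm (U * diag_rect m n (\<lambda>i. g_fun lam a (\<sigma> i)) * transpose_mat V - Y))\<^sup>2
      + lam * TS1 a (U * diag_rect m n (\<lambda>i. g_fun lam a (\<sigma> i)) * transpose_mat V)
    \<le> 1/2 * (frob_norm (X - Y))\<^sup>2 + lam * TS1 a X"
    using LHS unfolding G_def g_def by simp
qed



end
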